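(* In the disclosure game described in the context, an ordered partition $(\mathcal{A},\le_P)$ of $E$ is the equilibrium partition if and only if every $A\in\mathcal{A}$ is the largest lower contour set in $E\setminus\bigcup_{A'<_P A}A'$ that minimizes $\xi$; that is, $A$ solves $$\min_L \xi(L)\quad\text{s.t. } L \text{ is a lower contour set in } E\setminus\textstyle\bigcup_{A'<_PA}A',$$ and every $L$ solving this problem satisfies $L\subset A$.
   Context: Disclosure game. A state $\omega\in\{G,B\}$ is drawn with prior probability $\pi_0\in(0,1)$ on $G$. The evidence space $E$ is a finite or countably infinite set; $F_G,F_B$ are probability distributions on $E$ such that for every $e\in E$ at least one of $F_G(e),F_B(e)$ is strictly positive. The sender privately observes evidence $e$ drawn from $F_\omega$. A disclosure rule is a preorder $\precsim$ on $E$ (reflexive and transitive) satisfying: for every sequence $e_1\succsim e_2\succsim\cdots$ in $E$ there is $N\ge1$ with $e_N\precsim e_n$ for all $n\ge N$. The sender with evidence $e$ sends a message $m\in E$ with $m\precsim e$; the receiver takes an action $a\in\mathbb{R}$; for every $\mu\in[0,1]$ the receiver's expected-payoff maximization problem $\max_a \mu u_R(a,G)+(1-\mu)u_R(a,B)$ has a unique solution $\phi(\mu)$, with $\phi$ strictly increasing; the sender's payoff is $a$. For nonempty $A\subset E$ let $\nu(A)=\frac{F_G(A)\pi_0}{F_G(A)\pi_0+F_B(A)(1-\pi_0)}$ and $\xi(A)=\phi(\nu(A))$. For nonempty $A\subset E$, a nonempty $L\subset A$ is a lower contour set in $A$ if for all $e\in L$, $e'\in A$, $e'\precsim e$ implies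 $e'\in L$. An ordered partition of $E$ is a partition $\mathcal{A}$ of $E$ into nonempty sets with a total order $\le_P$ on $\mathcal{A}$ ($<_P$ its strict part). The equilibrium partition is the (unique, when it exists) ordered partition $(\mathcal{A},\le_P)$ of $E$ such that: (1) $A_1<_PA_2$ implies $\xi(A_1)<\xi(A_2)$; (2) for $A_1,A_2\in\mathcal{A}$, $e_1\in A_1$, $e_2\in A_2$, $e_1\precsim e_2$ implies $A_1\le_P A_2$; (3) for all $A\in\mathcal{A}$ and all lower contour sets $L$ in $A$, $\xi(L)\ge\xi(A)$. (Such a partition exists iff a truth-leaning equilibrium exists, and its cells are the level sets of the sender's equilibrium value function.) *)

theory Defs
  imports "HOL-Analysis.Analysis"
begin

datatype state = G | B

definition prob_of :: "('e \<Rightarrow> real) \<Rightarrow> 'e set \<Rightarrow> real" where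
  "prob_of f A = infsum f A"

definition nu :: "real \<Rightarrow> ('e \<Rightarrow> real) \<Rightarrow> ('e \<Rightarrow> real) \<Rightarrow> 'e set \<Rightarrow> real" where
  "nu \<pi>0 fG fB A = prob_of fG A * \<pi>0 / (prob_of fG A * \<pi>0 + prob_of fB A * (1 - \<pi>0))"

definition xi :: "(real \<Rightarrow> real) \<Rightarrow> real \<Rightarrow> ('e \<Rightarrow> real) \<Rightarrow> ('e \<Rightarrow> real) \<Rightarrow> 'e set \<Rightarrow> real" where
  "xi \<phi> \<pi>0 fG fB A = \<phi> (nu \<pi>0 fG fB A)"

text \<open>Disclosure rule: a preorder on E (rel x y means x \<precsim> y) with the
  descending-sequence condition.\<close>
definition disclosure_rule :: "'e set \<Rightarrow> ('e \<Rightarrow> 'e \<Rightarrow> bool) \<Rightarrow> bool" where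
  "disclosure_rule E rel \<longleftrightarrow>
     (\<forall>e\<in>E. rel e e) \<and>
     (\<forall>x\<in>E. \<forall>y\<in>E. \<forall>z\<in>E. rel x y \<longrightarrow> rel y z \<longrightarrow> rel x z) \<and>
     (\<forall>s::nat \<Rightarrow> 'e. (\<forall>n. s n \<in> E) \<and> (\<forall>n. rel (s (Suc n)) (s n)) \<longrightarrow>
        (\<exists>N. \<forall>n\<ge>N. rel (s N) (s n)))"

definition lower_contour :: "('e \<Rightarrow> 'e \<Rightarrow> bool) \<Rightarrow> 'e set \<Rightarrow> 'e set \<Rightarrow> bool" where
  "lower_contour rel A L \<longleftrightarrow> L \<noteq> {} \<and> L \<subseteq> A \<and>
     (\<forall>e\<in>L. \<forall>e'\<in>A. rel e' e \<longrightarrow> e' \<in> L)"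

definition ordered_partition :: "'e set \<Rightarrow> 'e set set \<Rightarrow> ('e set \<times> 'e set) set \<Rightarrow> bool" where
  "ordered_partition E P r \<longleftrightarrow>
     (\<forall>A\<in>P. A \<noteq> {}) \<and> \<Union>P = E \<and>
     (\<forall>A1\<in>P. \<forall>A2\<in>P. A1 \<noteq> A2 \<longrightarrow> A1 \<inter> A2 = {}) \<and>
     linear_order_on P r"

definition strictP :: "('e set \<times> 'e set) set \<Rightarrow> 'e set \<Rightarrow> 'e set \<Rightarrow> bool" where
  "strictP r A1 A2 \<longleftrightarrow> (A1, A2) \<in> r \<and> A1 \<noteq> A2"

definition equilibrium_partition ::
  "(real \<Rightarrow> real) \<Rightarrow> real \<Rightarrow> ('e \<Rightarrow> real) \<Rightarrow> ('e \<Rightarrow> real) \<Rightarrow> 'e set \<Rightarrow>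
   ('e \<Rightarrow> 'e \<Rightarrow> bool) \<Rightarrow> 'e set set \<Rightarrow> ('e set \<times> 'e set) set \<Rightarrow> bool" where
  "equilibrium_partition \<phi> \<pi>0 fG fB E rel P r \<longleftrightarrow>
     ordered_partition E P r \<and>
     (\<forall>A1\<in>P. \<forall>A2\<in>P. strictP r A1 A2 \<longrightarrow> xi \<phi> \<pi>0 fG fB A1 < xi \<phi> \<pi>0 fG fB A2) \<and>
     (\<forall>A1\<in>P. \<forall>A2\<in>P. \<forall>e1\<in>A1. \<forall>e2\<in>A2. rel e1 e2 \<longrightarrow> (A1, A2) \<in> r) \<and>
     (\<forall>A\<in>P. \<forall>L. lower_contour rel A L \<longrightarrow> xi \<phi> \<pi>0 fG fB L \<ge> xi \<phi> \<pi>0 fG fB A)"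

end

theory Submission
  imports Defs
begin

lemma part_has_sum:
  fixes f :: "'e \<Rightarrow> real" and P :: "'e set set"
  assumes sf: "f summable_on X" and cov: "X \<subseteq> \<Union>P"
    and dj: "\<forall>A1\<in>P. \<forall>A2\<in>P. A1 \<noteq> A2 \<longrightarrow> A1 \<inter> A2 = {}"
  shows "((\<lambda>D. infsum f (X \<inter> D)) has_sum infsum f X) P"
proof -
  let ?S = "Sigma P (\<lambda>D. X \<inter> D)"
  have inj: "inj_on snd ?S"
  proof (rule inj_onI)
    fix p q assume pq: "p \<in> ?S" "q \<in> ?S" "snd p = snd q"
    obtain D1 x where p: "p = (D1, x)" by (cases p)
    obtain D2 y where q: "q = (D2, y)" by (cases q)
    have h: "D1 \<in> P" "D2 \<in> P" "x \<in> D1" "y \<in> D2" "x = y" using pq p q by auto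
    have "D1 = D2"
    proof (rule ccontr)
      assume "D1 \<noteq> D2"
      hence "D1 \<inter> D2 = {}" using dj h(1,2) by blast
      thus False using h(3,4,5) by blast
    qed
    thus "p = q" using p q h(5) by simp
  qed
  have img: "snd ` ?S = X"
  proof
    show "snd ` ?S \<subseteq> X" by auto
    show "X \<subseteq> snd ` ?S"
    proof
      fix x assume x: "x \<in> X"
      then obtain D where D: "D \<in> P" "x \<in> D" using cov by blast
      hence "(D, x) \<in> ?S" using x by simp
      thus "x \<in> snd ` ?S" by (metis snd_conv image_eqI)
    qed
  qed
  have "(f has_sum infsum f X) X" using sf by simp
  hence "(f has_sum infsum f X) (snd ` ?S)" by (simp add: img)
  hence h: "((f \<circ> snd) has_sum infsum f X) ?S" using has_sum_reindex[OF inj] by blast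
  show ?thesis
  proof (rule has_sum_SigmaD[OF h])
    fix D assume "D \<in> P"
    have "f summable_on (X \<inter> D)" using summable_on_subset_banach[OF sf] by blast
    thus "((\<lambda>y. (f \<circ> snd) (D, y)) has_sum infsum f (X \<inter> D)) (X \<inter> D)" by simp
  qed
qed

lemma pos_infsum:
  fixes f :: "'e \<Rightarrow> real"
  assumes "f summable_on X" "\<forall>x\<in>X. f x \<ge> 0" "x \<in> X" "f x > 0"
  shows "infsum f X > 0"
proof -
  have "(f has_sum infsum f X) X" using assms(1) by simp
  moreover have "((\<lambda>_. 0::real) has_sum 0) {}" by simp
  ultimately show ?thesis
    using has_sum_strict_mono_neutral[where f="\<lambda>_. 0::real" and a=0 and A="{}" and g=f and b="infsum f X" and B=X and x=x] assms by auto
qed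

theorem theorem3:
  fixes E :: "'e set" and fG fB :: "'e \<Rightarrow> real" and \<pi>0 :: real
    and uR :: "real \<Rightarrow> state \<Rightarrow> real" and \<phi> :: "real \<Rightarrow> real"
    and rel :: "'e \<Rightarrow> 'e \<Rightarrow> bool"
    and P :: "'e set set" and r :: "('e set \<times> 'e set) set"
  assumes prior: "0 < \<pi>0" "\<pi>0 < 1"
    and E_countable: "countable E"
    and fG_dist: "\<forall>e\<in>E. fG e \<ge> 0" "(fG has_sum 1) E"
    and fB_dist: "\<forall>e\<in>E. fB e \<ge> 0" "(fB has_sum 1) E"
    and support: "\<forall>e\<in>E. fG e > 0 \<or> fB e > 0"
    and rule: "disclosure_rule E rel"
    and receiver: "\<forall>\<mu>\<in>{0..1}. \<forall>a.
        (\<forall>a'. \<mu> * uR a' G + (1 - \<mu>) * uR a' B \<le> \<mu> * uR a G + (1 - \<mu>) * uR a B)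
        \<longleftrightarrow> a = \<phi> \<mu>"
    and phi_mono: "strict_mono_on {0..1} \<phi>"
    and op: "ordered_partition E P r"
  shows "equilibrium_partition \<phi> \<pi>0 fG fB E rel P r \<longleftrightarrow>
    (\<forall>A\<in>P.
       let R = E - \<Union>{A'\<in>P. strictP r A' A} in
         lower_contour rel R A \<and>
         (\<forall>L. lower_contour rel R L \<longrightarrow> xi \<phi> \<pi>0 fG fB A \<le> xi \<phi> \<pi>0 fG fB L) \<and>
         (\<forall>L. lower_contour rel R L \<and>
              (\<forall>L'. lower_contour rel R L' \<longrightarrow> xi \<phi> \<pi>0 fG fB L \<le> xi \<phi> \<pi>0 fG fB L')
              \<longrightarrow> L \<subseteq> A))"
proof -
  define pG where "pG X = infsum fG X" for X
  define pB where "pB X = infsum fB X" for X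
  define Gs where "Gs X = pG X * \<pi>0" for X
  define W where "W X = pG X * \<pi>0 + pB X * (1 - \<pi>0)" for X
  define N where "N X = Gs X / W X" for X
  define Phi where "Phi t X = Gs X - t * W X" for t X
  define Rof where "Rof A = E - \<Union>{A'\<in>P. strictP r A' A}" for A
  define U where "U Y Z = \<Union>{D\<in>P. (Y,D)\<in>r \<and> (D,Z)\<in>r}" for Y Z
  have nuN: "nu \<pi>0 fG fB X = N X" for X
    by (simp add: nu_def N_def Gs_def W_def pG_def pB_def prob_of_def)
  have xiN: "xi \<phi> \<pi>0 fG fB X = \<phi> (N X)" for X
    by (simp add: xi_def nuN)
  have sG: "fG summable_on X" if "X \<subseteq> E" for X
    using summable_on_subset_banach[of fG E X] fG_dist(2) that by (auto simp: summable_on_def)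
  have sB: "fB summable_on X" if "X \<subseteq> E" for X
    using summable_on_subset_banach[of fB E X] fB_dist(2) that by (auto simp: summable_on_def)
  have pG_nn: "pG X \<ge> 0" if "X \<subseteq> E" for X
    unfolding pG_def using fG_dist(1) that by (intro infsum_nonneg) auto
  have pB_nn: "pB X \<ge> 0" if "X \<subseteq> E" for X
    unfolding pB_def using fB_dist(1) that by (intro infsum_nonneg) auto
  have pG1: "pG E = 1" unfolding pG_def using fG_dist(2) by (simp add: infsumI)
  have pB1: "pB E = 1" unfolding pB_def using fB_dist(2) by (simp add: infsumI)
  have pG_le: "pG X \<le> 1" if "X \<subseteq> E" for X
  proof -
    have "pG X \<le> pG E" unfolding pG_def
      using infsum_mono_neutral[of fG X fG E] sG[OF that] sG[of E] fG_dist(1) that by auto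
    thus ?thesis using pG1 by simp
  qed
  have pB_le: "pB X \<le> 1" if "X \<subseteq> E" for X
  proof -
    have "pB X \<le> pB E" unfolding pB_def
      using infsum_mono_neutral[of fB X fB E] sB[OF that] sB[of E] fB_dist(1) that by auto
    thus ?thesis using pB1 by simp
  qed
  have W_nn: "W X \<ge> 0" if "X \<subseteq> E" for X
    unfolding W_def using pG_nn[OF that] pB_nn[OF that] prior by simp
  have W_le: "W X \<le> 1" if "X \<subseteq> E" for X
  proof -
    have "pG X * \<pi>0 \<le> \<pi>0" using pG_le[OF that] prior by (simp add: mult_left_le_one_le)
    moreover have "pB X * (1 - \<pi>0) \<le> 1 - \<pi>0" using pB_le[OF that] prior by (simp add: mult_left_le_one_le)
    ultimately show ?thesis unfolding W_def by simp
  qed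
  have W_pos: "W X > 0" if XE: "X \<subseteq> E" and XNE: "X \<noteq> {}" for X
  proof -
    obtain e where e: "e \<in> X" using XNE by auto
    hence "fG e > 0 \<or> fB e > 0" using support XE by auto
    thus ?thesis
    proof
      assume "fG e > 0"
      hence "pG X > 0" unfolding pG_def using pos_infsum[OF sG[OF XE]] fG_dist(1) XE e by auto
      thus ?thesis unfolding W_def using pB_nn[OF XE] prior
        by (simp add: add_pos_nonneg)
    next
      assume "fB e > 0"
      hence "pB X > 0" unfolding pB_def using pos_infsum[OF sB[OF XE]] fB_dist(1) XE e by auto
      thus ?thesis unfolding W_def using pG_nn[OF XE] prior
        by (simp add: add_nonneg_pos)
    qed
  qed
  have N_range: "0 \<le> N X \<and> N X \<le> 1" if "X \<subseteq> E" "X \<noteq> {}" for X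
  proof -
    have w: "W X > 0" using W_pos[OF that] .
    have g: "Gs X \<ge> 0" "Gs X \<le> W X" unfolding Gs_def W_def
      using pG_nn[OF that(1)] pB_nn[OF that(1)] prior by auto
    show ?thesis unfolding N_def using w g by (simp add: divide_le_eq_1)
  qed
  have Phi_eq: "Phi t X = W X * (N X - t)" if "X \<subseteq> E" "X \<noteq> {}" for X t
    using W_pos[OF that] unfolding Phi_def N_def by (simp add: field_simps)
  have Phi_shift: "Phi t X = Phi (t + d) X + d * W X" for t d X
    unfolding Phi_def by (simp add: algebra_simps)
  have Phi_empty: "Phi t {} = 0" for t
    unfolding Phi_def Gs_def W_def pG_def pB_def by simp
  have Phi_Un: "Phi t (X \<union> Y) = Phi t X + Phi t Y" if "X \<subseteq> E" "Y \<subseteq> E" "X \<inter> Y = {}" for t X Y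
  proof -
    have "pG (X \<union> Y) = pG X + pG Y" unfolding pG_def
      using infsum_Un_disjoint[OF sG[OF that(1)] sG[OF that(2)] that(3)] .
    moreover have "pB (X \<union> Y) = pB X + pB Y" unfolding pB_def
      using infsum_Un_disjoint[OF sB[OF that(1)] sB[OF that(2)] that(3)] .
    ultimately show ?thesis unfolding Phi_def Gs_def W_def by (simp add: algebra_simps)
  qed
  have xi_le: "xi \<phi> \<pi>0 fG fB X \<le> xi \<phi> \<pi>0 fG fB Y \<longleftrightarrow> N X \<le> N Y"
    if "X \<subseteq> E" "X \<noteq> {}" "Y \<subseteq> E" "Y \<noteq> {}" for X Y
    unfolding xiN using strict_mono_on_less_eq[OF phi_mono] N_range[OF that(1,2)] N_range[OF that(3,4)]
    by auto
  have xi_less: "xi \<phi> \<pi>0 fG fB X < xi \<phi> \<pi>0 fG fB Y \<longleftrightarrow> N X < N Y"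
    if "X \<subseteq> E" "X \<noteq> {}" "Y \<subseteq> E" "Y \<noteq> {}" for X Y
    unfolding xiN using strict_mono_on_less[OF phi_mono] N_range[OF that(1,2)] N_range[OF that(3,4)]
    by auto
  have P_ne: "\<forall>A\<in>P. A \<noteq> {}" and P_un: "\<Union>P = E"
    and P_dj: "\<forall>A1\<in>P. \<forall>A2\<in>P. A1 \<noteq> A2 \<longrightarrow> A1 \<inter> A2 = {}" and lin: "linear_order_on P r"
    using op unfolding ordered_partition_def by auto
  have r_refl: "(D, D) \<in> r" if "D \<in> P" for D
    using lin that unfolding linear_order_on_def partial_order_on_def preorder_on_def refl_on_def by auto
  have r_trans: "(x, z) \<in> r" if "(x, y) \<in> r" "(y, z) \<in> r" for x y z
    using lin that unfolding linear_order_on_def partial_order_on_def preorder_on_def trans_def by blast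
  have r_anti: "x = y" if "(x, y) \<in> r" "(y, x) \<in> r" for x y
    using lin that unfolding linear_order_on_def partial_order_on_def antisym_def by blast
  have r_tot: "(x, y) \<in> r \<or> (y, x) \<in> r" if "x \<in> P" "y \<in> P" for x y
  proof (cases "x = y")
    case True thus ?thesis using r_refl that by simp
  next
    case False
    have "total_on P r" using lin unfolding linear_order_on_def by simp
    thus ?thesis using False that unfolding total_on_def by simp
  qed
  have r_sub: "x \<in> P \<and> y \<in> P" if "(x, y) \<in> r" for x y
  proof -
    have "r \<subseteq> P \<times> P" using lin unfolding linear_order_on_def partial_order_on_def preorder_on_def by simp
    thus ?thesis using that by auto
  qed
  have cell_sub: "D \<subseteq> E" if "D \<in> P" for D using P_un that by blast
  have cell_uniq: "D1 = D2" if "D1 \<in> P" "D2 \<in> P" "e \<in> D1" "e \<in> D2" for D1 D2 e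
    using P_dj that by blast
  have cell_ex: "\<exists>D\<in>P. e \<in> D" if "e \<in> E" for e using P_un that by blast
  have R_char: "e \<in> Rof A \<longleftrightarrow> (\<exists>D\<in>P. e \<in> D \<and> (A, D) \<in> r)" if "A \<in> P" for A e
  proof
    assume "e \<in> Rof A"
    hence eE: "e \<in> E" and nl: "\<forall>A'\<in>P. strictP r A' A \<longrightarrow> e \<notin> A'" unfolding Rof_def by auto
    obtain D where D: "D \<in> P" "e \<in> D" using cell_ex[OF eE] by auto
    have "(A, D) \<in> r"
    proof (cases "D = A")
      case True thus ?thesis using r_refl that by simp
    next
      case False
      thus ?thesis using nl D r_tot[OF that D(1)] unfolding strictP_def by auto
    qed
    thus "\<exists>D\<in>P. e \<in> D \<and> (A, D) \<in> r" using D by auto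
  next
    assume "\<exists>D\<in>P. e \<in> D \<and> (A, D) \<in> r"
    then obtain D where D: "D \<in> P" "e \<in> D" "(A, D) \<in> r" by auto
    have "e \<in> E" using cell_sub D by auto
    moreover have "e \<notin> A'" if "A' \<in> P" "strictP r A' A" for A'
    proof
      assume "e \<in> A'"
      hence "A' = D" using cell_uniq that D by auto
      thus False using that D r_anti unfolding strictP_def by auto
    qed
    ultimately show "e \<in> Rof A" unfolding Rof_def by auto
  qed
  have Rof_sub: "Rof A \<subseteq> E" for A unfolding Rof_def by auto
  have Phi_sum: "((\<lambda>D. Phi t (X \<inter> D)) has_sum Phi t X) P" if "X \<subseteq> E" for X t
  proof -
    have a: "((\<lambda>D. pG (X \<inter> D)) has_sum pG X) P" unfolding pG_def
      using part_has_sum[OF sG[OF that]] that P_un P_dj by auto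
    have b: "((\<lambda>D. pB (X \<inter> D)) has_sum pB X) P" unfolding pB_def
      using part_has_sum[OF sB[OF that]] that P_un P_dj by auto
    have "((\<lambda>D. ((1 - t) * \<pi>0) * pG (X \<inter> D) + (- (t * (1 - \<pi>0))) * pB (X \<inter> D)) has_sum
           (((1 - t) * \<pi>0) * pG X + (- (t * (1 - \<pi>0))) * pB X)) P"
      by (intro has_sum_add has_sum_cmult_right a b)
    moreover have "Phi t Y = ((1 - t) * \<pi>0) * pG Y + (- (t * (1 - \<pi>0))) * pB Y" for Y
      unfolding Phi_def Gs_def W_def by (simp add: algebra_simps)
    ultimately show ?thesis by simp
  qed
  have sum_nonneg: "Phi t X \<ge> 0"
    if "X \<subseteq> E" "\<And>D. D \<in> P \<Longrightarrow> X \<inter> D \<noteq> {} \<Longrightarrow> N (X \<inter> D) \<ge> t" for X t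
  proof -
    have "Phi t (X \<inter> D) \<ge> 0" if "D \<in> P" for D
    proof (cases "X \<inter> D = {}")
      case True thus ?thesis using Phi_empty by simp
    next
      case False
      have XD: "X \<inter> D \<subseteq> E" using \<open>X \<subseteq> E\<close> by auto
      have "N (X \<inter> D) \<ge> t" using \<open>\<And>D. D \<in> P \<Longrightarrow> X \<inter> D \<noteq> {} \<Longrightarrow> N (X \<inter> D) \<ge> t\<close>[OF that False] .
      thus ?thesis using Phi_eq[OF XD False, of t] W_nn[OF XD] by simp
    qed
    thus ?thesis using has_sum_nonneg[OF Phi_sum[OF that(1)]] by auto
  qed
  have sum_pos: "Phi t X > 0"
    if "X \<subseteq> E" "\<And>D. D \<in> P \<Longrightarrow> X \<inter> D \<noteq> {} \<Longrightarrow> N (X \<inter> D) \<ge> t"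
       "D0 \<in> P" "X \<inter> D0 \<noteq> {}" "N (X \<inter> D0) > t" for X t D0
  proof -
    have "Phi t (X \<inter> D) \<ge> 0" if "D \<in> P" for D
    proof (cases "X \<inter> D = {}")
      case True thus ?thesis using Phi_empty by simp
    next
      case False
      have XD: "X \<inter> D \<subseteq> E" using \<open>X \<subseteq> E\<close> by auto
      have "N (X \<inter> D) \<ge> t" using \<open>\<And>D. D \<in> P \<Longrightarrow> X \<inter> D \<noteq> {} \<Longrightarrow> N (X \<inter> D) \<ge> t\<close>[OF that False] .
      thus ?thesis using Phi_eq[OF XD False, of t] W_nn[OF XD] by simp
    qed
    moreover have "Phi t (X \<inter> D0) > 0"
    proof -
      have XD: "X \<inter> D0 \<subseteq> E" using \<open>X \<subseteq> E\<close> by auto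
      show ?thesis using Phi_eq[OF XD that(4), of t] W_pos[OF XD that(4)] that(5) by simp
    qed
    moreover have "((\<lambda>_. 0::real) has_sum 0) P" by simp
    ultimately show ?thesis
      using has_sum_strict_mono[where f="\<lambda>_. 0::real" and a=0 and g="\<lambda>D. Phi t (X \<inter> D)" and b="Phi t X" and A=P and x=D0]
        Phi_sum[OF that(1), of t] that(3) by auto
  qed
  have sum_nonpos: "Phi t X \<le> 0"
    if "X \<subseteq> E" "\<And>D. D \<in> P \<Longrightarrow> X \<inter> D \<noteq> {} \<Longrightarrow> N (X \<inter> D) \<le> t" for X t
  proof -
    have "Phi t (X \<inter> D) \<le> 0" if "D \<in> P" for D
    proof (cases "X \<inter> D = {}")
      case True thus ?thesis using Phi_empty by simp
    next
      case False
      hence "W (X \<inter> D) > 0" using W_pos[of "X \<inter> D"] \<open>X \<subseteq> E\<close> by auto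
      have XD: "X \<inter> D \<subseteq> E" using \<open>X \<subseteq> E\<close> by auto
      have "N (X \<inter> D) \<le> t" using \<open>\<And>D. D \<in> P \<Longrightarrow> X \<inter> D \<noteq> {} \<Longrightarrow> N (X \<inter> D) \<le> t\<close>[OF that False] .
      thus ?thesis using Phi_eq[OF XD False, of t] \<open>W (X \<inter> D) > 0\<close> by (simp add: mult_nonneg_nonpos)
    qed
    moreover have "((\<lambda>_. 0::real) has_sum 0) P" by simp
    ultimately show ?thesis
      using has_sum_mono[where g="\<lambda>_. 0::real" and y=0 and f="\<lambda>D. Phi t (X \<inter> D)" and x="Phi t X" and A=P]
        Phi_sum[OF that(1), of t] by auto
  qed
  have Rof_eq: "E - \<Union>{A'\<in>P. strictP r A' A} = Rof A" for A by (simp add: Rof_def)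
  have Phi_gt: "N A < N X" if "X \<subseteq> E" "X \<noteq> {}" "Phi (N A) X > 0" for A X
    using Phi_eq[OF that(1,2), of "N A"] W_pos[OF that(1,2)] that(3) by (simp add: zero_less_mult_iff)
  have Phi_ge: "N A \<le> N X" if "X \<subseteq> E" "X \<noteq> {}" "Phi (N A) X \<ge> 0" for A X
    using Phi_eq[OF that(1,2), of "N A"] W_pos[OF that(1,2)] that(3) by (simp add: zero_le_mult_iff)
  have Phi_gt': "Phi (N A) X > 0" if "X \<subseteq> E" "X \<noteq> {}" "N A < N X" for A X
    using Phi_eq[OF that(1,2), of "N A"] W_pos[OF that(1,2)] that(3) by simp
  have cellE: "D \<subseteq> E" "D \<noteq> {}" if "D \<in> P" for D using cell_sub P_ne that by auto
  have Ufam: "(Y, D) \<in> r \<and> (D, Z) \<in> r" if hh: "D \<in> P" "e \<in> D" "e \<in> U Y Z" for Y Z D e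
  proof -
    obtain D' where "D' \<in> P" "(Y, D') \<in> r" "(D', Z) \<in> r" "e \<in> D'" using hh(3) unfolding U_def by auto
    moreover have "D' = D" using cell_uniq calculation hh by blast
    ultimately show ?thesis by auto
  qed
  have Ucell: "D \<subseteq> U Y Z" if "D \<in> P" "(Y, D) \<in> r" "(D, Z) \<in> r" for Y Z D
    using that unfolding U_def by auto
  have U_E: "U Y Z \<subseteq> E" for Y Z unfolding U_def using cell_sub by auto
  show ?thesis
    unfolding Let_def Rof_eq
  proof
    assume EP: "equilibrium_partition \<phi> \<pi>0 fG fB E rel P r"
    have inc: "N A1 < N A2" if "A1 \<in> P" "A2 \<in> P" "strictP r A1 A2" for A1 A2
    proof -
      have "xi \<phi> \<pi>0 fG fB A1 < xi \<phi> \<pi>0 fG fB A2" using EP that unfolding equilibrium_partition_def by auto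
      thus ?thesis using xi_less cellE that by blast
    qed
    have mon: "(A1, A2) \<in> r" if "A1 \<in> P" "A2 \<in> P" "e1 \<in> A1" "e2 \<in> A2" "rel e1 e2" for A1 A2 e1 e2
      using EP that unfolding equilibrium_partition_def by blast
    have lc3: "N A \<le> N L" if "A \<in> P" "lower_contour rel A L" for A L
    proof -
      have "xi \<phi> \<pi>0 fG fB A \<le> xi \<phi> \<pi>0 fG fB L" using EP that unfolding equilibrium_partition_def by auto
      moreover have "L \<subseteq> E" "L \<noteq> {}" using that cell_sub unfolding lower_contour_def by auto
      ultimately show ?thesis using xi_le cellE that(1) by blast
    qed
    have NAD: "N A \<le> N D" if "A \<in> P" "D \<in> P" "(A, D) \<in> r" for A D
      using inc[OF that(1,2)] that(3) unfolding strictP_def by (cases "A = D") auto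
    have lcA: "lower_contour rel (Rof A) A" if A: "A \<in> P" for A
    proof -
      have "A \<subseteq> Rof A" using R_char[OF A] r_refl[OF A] A by auto
      moreover have "e' \<in> A" if hh: "e \<in> A" "e' \<in> Rof A" "rel e' e" for e e'
      proof -
        obtain D where D: "D \<in> P" "e' \<in> D" "(A, D) \<in> r" using R_char[OF A] hh(2) by auto
        have "(D, A) \<in> r" using mon[OF D(1) A D(2) hh(1,3)] .
        hence "D = A" using r_anti D(3) by auto
        thus ?thesis using D by simp
      qed
      ultimately show ?thesis unfolding lower_contour_def using P_ne A by auto
    qed
    have piece: "(A, D) \<in> r \<and> N D \<le> N (L \<inter> D)"
      if A: "A \<in> P" and L: "lower_contour rel (Rof A) L" and D: "D \<in> P" and ne: "L \<inter> D \<noteq> {}" for A L D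
    proof -
      obtain e where e: "e \<in> L" "e \<in> D" using ne by auto
      have "e \<in> Rof A" using L e unfolding lower_contour_def by auto
      then obtain D' where D': "D' \<in> P" "e \<in> D'" "(A, D') \<in> r" using R_char[OF A] by auto
      have AD: "(A, D) \<in> r" using cell_uniq[OF D'(1) D D'(2) e(2)] D'(3) by simp
      have "lower_contour rel D (L \<inter> D)"
        unfolding lower_contour_def
      proof (intro conjI ballI impI)
        show "L \<inter> D \<noteq> {}" by (rule ne)
        show "L \<inter> D \<subseteq> D" by auto
        fix e1 e' assume h: "e1 \<in> L \<inter> D" "e' \<in> D" "rel e' e1"
        have "e' \<in> Rof A" using R_char[OF A] h(2) D AD by auto
        hence "e' \<in> L" using L h unfolding lower_contour_def by auto
        thus "e' \<in> L \<inter> D" using h by auto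
      qed
      hence "N D \<le> N (L \<inter> D)" using lc3 D by auto
      thus ?thesis using AD by simp
    qed
    show "\<forall>A\<in>P. lower_contour rel (Rof A) A \<and>
         (\<forall>L. lower_contour rel (Rof A) L \<longrightarrow> xi \<phi> \<pi>0 fG fB A \<le> xi \<phi> \<pi>0 fG fB L) \<and>
         (\<forall>L. lower_contour rel (Rof A) L \<and>
              (\<forall>L'. lower_contour rel (Rof A) L' \<longrightarrow> xi \<phi> \<pi>0 fG fB L \<le> xi \<phi> \<pi>0 fG fB L') \<longrightarrow>
              L \<subseteq> A)"
    proof
      fix A assume A: "A \<in> P"
      have LE: "L \<subseteq> E" "L \<noteq> {}" if "lower_contour rel (Rof A) L" for L
        using that Rof_sub unfolding lower_contour_def by auto
      have b: "xi \<phi> \<pi>0 fG fB A \<le> xi \<phi> \<pi>0 fG fB L" if L: "lower_contour rel (Rof A) L" for L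
      proof -
        have "Phi (N A) L \<ge> 0"
        proof (rule sum_nonneg[OF LE(1)[OF L]])
          fix D assume "D \<in> P" "L \<inter> D \<noteq> {}"
          thus "N A \<le> N (L \<inter> D)" using piece[OF A L] NAD[OF A] by force
        qed
        hence "N A \<le> N L" using Phi_ge LE[OF L] by blast
        thus ?thesis using xi_le LE[OF L] cellE[OF A] by blast
      qed
      have c: "L \<subseteq> A" if L: "lower_contour rel (Rof A) L"
        and mn: "\<forall>L'. lower_contour rel (Rof A) L' \<longrightarrow> xi \<phi> \<pi>0 fG fB L \<le> xi \<phi> \<pi>0 fG fB L'" for L
      proof
        fix e assume eL: "e \<in> L"
        show "e \<in> A"
        proof (rule ccontr)
          assume eA: "e \<notin> A"
          obtain D where D: "D \<in> P" "e \<in> D" using cell_ex LE[OF L] eL by blast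
          have pc: "(A, D) \<in> r" "N D \<le> N (L \<inter> D)" using piece[OF A L D(1)] eL D by auto
          have "D \<noteq> A" using D eA by auto
          hence lt: "N A < N D" using inc A D pc unfolding strictP_def by auto
          have "Phi (N A) L > 0"
          proof (rule sum_pos[OF LE(1)[OF L] _ D(1)])
            fix D' assume "D' \<in> P" "L \<inter> D' \<noteq> {}"
            thus "N A \<le> N (L \<inter> D')" using piece[OF A L] NAD[OF A] by force
          next
            show "L \<inter> D \<noteq> {}" using eL D by auto
            show "N A < N (L \<inter> D)" using lt pc by simp
          qed
          hence "N A < N L" using Phi_gt LE[OF L] by blast
          moreover have "xi \<phi> \<pi>0 fG fB L \<le> xi \<phi> \<pi>0 fG fB A" using mn lcA[OF A] by auto
          hence "N L \<le> N A" using xi_le LE[OF L] cellE[OF A] by blast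
          ultimately show False by simp
        qed
      qed
      show "lower_contour rel (Rof A) A \<and>
         (\<forall>L. lower_contour rel (Rof A) L \<longrightarrow> xi \<phi> \<pi>0 fG fB A \<le> xi \<phi> \<pi>0 fG fB L) \<and>
         (\<forall>L. lower_contour rel (Rof A) L \<and>
              (\<forall>L'. lower_contour rel (Rof A) L' \<longrightarrow> xi \<phi> \<pi>0 fG fB L \<le> xi \<phi> \<pi>0 fG fB L') \<longrightarrow>
              L \<subseteq> A)"
        using lcA[OF A] b c by blast
    qed
  next
    assume CH: "\<forall>A\<in>P. lower_contour rel (Rof A) A \<and>
         (\<forall>L. lower_contour rel (Rof A) L \<longrightarrow> xi \<phi> \<pi>0 fG fB A \<le> xi \<phi> \<pi>0 fG fB L) \<and>
         (\<forall>L. lower_contour rel (Rof A) L \<and>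
              (\<forall>L'. lower_contour rel (Rof A) L' \<longrightarrow> xi \<phi> \<pi>0 fG fB L \<le> xi \<phi> \<pi>0 fG fB L') \<longrightarrow>
              L \<subseteq> A)"
    have lcA: "lower_contour rel (Rof A) A" if "A \<in> P" for A using CH that by blast
    have minA: "xi \<phi> \<pi>0 fG fB A \<le> xi \<phi> \<pi>0 fG fB L" if "A \<in> P" "lower_contour rel (Rof A) L" for A L
      using CH that by blast
    have largeA: "L \<subseteq> A" if "A \<in> P" "lower_contour rel (Rof A) L"
      "\<forall>L'. lower_contour rel (Rof A) L' \<longrightarrow> xi \<phi> \<pi>0 fG fB L \<le> xi \<phi> \<pi>0 fG fB L'" for A L
      using CH that by blast
    have mon: "(A1, A2) \<in> r" if A12: "A1 \<in> P" "A2 \<in> P" and e: "e1 \<in> A1" "e2 \<in> A2" "rel e1 e2" for A1 A2 e1 e2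
    proof (rule ccontr)
      assume nr: "(A1, A2) \<notin> r"
      hence "A1 \<noteq> A2" using r_refl A12 by auto
      have "(A2, A1) \<in> r" using r_tot[OF A12] nr by auto
      hence "e1 \<in> Rof A2" using R_char[OF A12(2)] A12 e by auto
      hence "e1 \<in> A2" using lcA[OF A12(2)] e unfolding lower_contour_def by blast
      hence "A1 = A2" using cell_uniq A12 e by blast
      thus False using \<open>A1 \<noteq> A2\<close> by simp
    qed
    have lc3: "xi \<phi> \<pi>0 fG fB A \<le> xi \<phi> \<pi>0 fG fB L" if A: "A \<in> P" and L: "lower_contour rel A L" for A L
    proof -
      have "A \<subseteq> Rof A" using R_char[OF A] r_refl[OF A] A by auto
      have "lower_contour rel (Rof A) L"
        unfolding lower_contour_def
      proof (intro conjI ballI impI)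
        show "L \<noteq> {}" using L unfolding lower_contour_def by auto
        show "L \<subseteq> Rof A" using L \<open>A \<subseteq> Rof A\<close> unfolding lower_contour_def by auto
        fix e e' assume h: "e \<in> L" "e' \<in> Rof A" "rel e' e"
        have "e \<in> A" using L h unfolding lower_contour_def by auto
        hence "e' \<in> A" using lcA[OF A] h unfolding lower_contour_def by blast
        thus "e' \<in> L" using L h unfolding lower_contour_def by blast
      qed
      thus ?thesis using minA A by blast
    qed
    have K: "N Y < N (U Y Z)" if Y: "Y \<in> P" and Z: "Z \<in> P" and YZ: "strictP r Y Z" for Y Z
    proof -
      have ZU: "Z \<subseteq> U Y Z" using Ucell[OF Z] YZ r_refl[OF Z] unfolding strictP_def by auto
      have Une: "U Y Z \<noteq> {}" using ZU P_ne Z by auto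
      have lcU: "lower_contour rel (Rof Y) (U Y Z)"
        unfolding lower_contour_def
      proof (intro conjI ballI impI)
        show "U Y Z \<noteq> {}" by (rule Une)
        show "U Y Z \<subseteq> Rof Y"
        proof
          fix e assume "e \<in> U Y Z"
          then obtain D where "D \<in> P" "e \<in> D" "(Y, D) \<in> r" unfolding U_def by auto
          thus "e \<in> Rof Y" using R_char[OF Y] by auto
        qed
        fix e e' assume h: "e \<in> U Y Z" "e' \<in> Rof Y" "rel e' e"
        obtain D where D: "D \<in> P" "e \<in> D" "(Y, D) \<in> r" "(D, Z) \<in> r" using h(1) unfolding U_def by auto
        obtain D' where D': "D' \<in> P" "e' \<in> D'" "(Y, D') \<in> r" using R_char[OF Y] h(2) by auto
        have "(D', D) \<in> r" using mon[OF D'(1) D(1) D'(2) D(2) h(3)] .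
        hence "(D', Z) \<in> r" using r_trans D(4) by blast
        thus "e' \<in> U Y Z" using Ucell[OF D'(1) D'(3)] D'(2) by auto
      qed
      have nsub: "\<not> U Y Z \<subseteq> Y"
      proof
        assume "U Y Z \<subseteq> Y"
        obtain z where "z \<in> Z" using P_ne Z by auto
        hence "z \<in> Y" using ZU \<open>U Y Z \<subseteq> Y\<close> by auto
        hence "Y = Z" using cell_uniq Y Z \<open>z \<in> Z\<close> by blast
        thus False using YZ unfolding strictP_def by simp
      qed
      obtain L' where L': "lower_contour rel (Rof Y) L'" "\<not> xi \<phi> \<pi>0 fG fB (U Y Z) \<le> xi \<phi> \<pi>0 fG fB L'"
        using largeA[OF Y lcU] nsub by blast
      have "xi \<phi> \<pi>0 fG fB Y \<le> xi \<phi> \<pi>0 fG fB L'" using minA[OF Y L'(1)] .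
      hence "xi \<phi> \<pi>0 fG fB Y < xi \<phi> \<pi>0 fG fB (U Y Z)" using L'(2) by simp
      thus ?thesis using xi_less cellE[OF Y] U_E Une by blast
    qed
    have inc: "N Y < N Z" if Y: "Y \<in> P" and Z: "Z \<in> P" and YZ: "strictP r Y Z" for Y Z
    proof -
      define S where "S = {D\<in>P. (Y, D) \<in> r \<and> (D, Z) \<in> r \<and> D \<noteq> Z}"
      define s where "s = Sup (N ` S)"
      have YS: "Y \<in> S" using Y YZ r_refl[OF Y] unfolding S_def strictP_def by auto
      have bdd: "bdd_above (N ` S)"
        using N_range cellE unfolding S_def by (intro bdd_aboveI[of _ 1]) auto
      have Ns: "N D \<le> s" if "D \<in> S" for D
        unfolding s_def using cSup_upper[OF _ bdd] that by auto
      have SP: "D \<in> P" "(Y, D) \<in> r" "(D, Z) \<in> r" "D \<noteq> Z" if "D \<in> S" for D using that unfolding S_def by auto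
      have WZ: "W Z > 0" "W Z \<le> 1" using W_pos W_le cellE[OF Z] by auto
      show "N Y < N Z"
      proof (rule ccontr)
        assume "\<not> N Y < N Z"
        hence ZY: "N Z \<le> N Y" by simp
        have Ys: "N Y \<le> s" using Ns YS .
        show False
        proof (cases "N Z < s")
          case True
          define \<epsilon> where "\<epsilon> = W Z * (s - N Z) / 2"
          have epos: "\<epsilon> > 0" unfolding \<epsilon>_def using WZ True by simp
          have "s - \<epsilon> < s" using epos by simp
          then obtain Pc where Pc: "Pc \<in> S" "s - \<epsilon> < N Pc"
            using less_cSup_iff[of "N ` S" "s - \<epsilon>"] bdd YS unfolding s_def by auto
          have PcP: "Pc \<in> P" "(Pc, Z) \<in> r" "Pc \<noteq> Z" "(Y, Pc) \<in> r" using SP[OF Pc(1)] by auto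
          have KP: "N Pc < N (U Pc Z)" using K[OF PcP(1) Z] PcP unfolding strictP_def by auto
          have ZU: "Z \<subseteq> U Pc Z" using Ucell[OF Z PcP(2) r_refl[OF Z]] .
          have Une: "U Pc Z \<noteq> {}" using ZU cellE[OF Z] by auto
          define V where "V = U Pc Z - Z"
          have VE: "V \<subseteq> E" using U_E unfolding V_def by auto
          have UV: "U Pc Z = V \<union> Z" "V \<inter> Z = {}" using ZU unfolding V_def by auto
          have p1: "Phi (N Pc) (U Pc Z) > 0" using Phi_gt'[OF U_E Une KP] .
          have p2: "Phi (N Pc) (U Pc Z) = Phi (N Pc) V + Phi (N Pc) Z"
            using Phi_Un[OF VE cell_sub[OF Z] UV(2)] UV(1) by simp
          have p3: "Phi (N Pc + \<epsilon>) V \<le> 0"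
          proof (rule sum_nonpos[OF VE])
            fix D assume D: "D \<in> P" "V \<inter> D \<noteq> {}"
            then obtain e where e: "e \<in> V" "e \<in> D" by auto
            have fam: "(Pc, D) \<in> r" "(D, Z) \<in> r" using Ufam[OF D(1) e(2)] e(1) unfolding V_def by auto
            have "D \<noteq> Z" using e unfolding V_def by auto
            hence DZ: "D \<inter> Z = {}" using P_dj D(1) Z by auto
            have VD: "V \<inter> D = D" using Ucell[OF D(1) fam] DZ unfolding V_def by auto
            have "D \<in> S" using D(1) fam \<open>D \<noteq> Z\<close> r_trans[OF PcP(4) fam(1)] unfolding S_def by auto
            hence "N D \<le> s" by (rule Ns)
            thus "N (V \<inter> D) \<le> N Pc + \<epsilon>" using VD Pc(2) by simp
          qed
          have p4: "Phi (N Pc) V = Phi (N Pc + \<epsilon>) V + \<epsilon> * W V" by (rule Phi_shift)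
          have "W V \<le> 1" using W_le[OF VE] .
          hence p5: "\<epsilon> * W V \<le> \<epsilon>" using epos W_nn[OF VE] by (simp add: mult_left_le_one_le mult_le_cancel_left1)
          have p6: "Phi (N Pc) Z = W Z * (N Z - N Pc)" using Phi_eq cellE[OF Z] by blast
          have p7: "W Z * (N Z - N Pc) < W Z * (N Z - s + \<epsilon>)"
            using Pc(2) WZ(1) by (intro mult_strict_left_mono) auto
          have p8a: "W Z * (s - N Z) = 2 * \<epsilon>" unfolding \<epsilon>_def by simp
          have p8b: "W Z * (N Z - s + \<epsilon>) = W Z * \<epsilon> - W Z * (s - N Z)" by (simp add: algebra_simps)
          have p9: "W Z * \<epsilon> \<le> \<epsilon>" using WZ epos by (simp add: mult_left_le_one_le)
          show False using p1 p2 p3 p4 p5 p6 p7 p8a p8b p9 by linarith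
        next
          case False
          hence eq: "s \<le> N Z" by simp
          have p1: "Phi (N Y) (U Y Z) > 0"
            using Phi_gt'[OF U_E _ K[OF Y Z YZ]] Ucell[OF Z] YZ r_refl[OF Z] cellE[OF Z]
            unfolding strictP_def by blast
          have p2: "Phi (N Y) (U Y Z) \<le> 0"
          proof (rule sum_nonpos[OF U_E])
            fix D assume D: "D \<in> P" "U Y Z \<inter> D \<noteq> {}"
            then obtain e where e: "e \<in> U Y Z" "e \<in> D" by auto
            have fam: "(Y, D) \<in> r" "(D, Z) \<in> r" using Ufam[OF D(1) e(2) e(1)] by auto
            have UD: "U Y Z \<inter> D = D" using Ucell[OF D(1) fam] by auto
            have "N D \<le> N Y"
            proof (cases "D = Z")
              case True thus ?thesis using ZY by simp
            next
              case False
              hence "D \<in> S" using D(1) fam unfolding S_def by auto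
              thus ?thesis using Ns eq ZY by force
            qed
            thus "N (U Y Z \<inter> D) \<le> N Y" using UD by simp
          qed
          show False using p1 p2 by simp
        qed
      qed
    qed
    show "equilibrium_partition \<phi> \<pi>0 fG fB E rel P r"
      unfolding equilibrium_partition_def
    proof (intro conjI ballI impI allI)
      show "ordered_partition E P r" by (rule op)
    next
      fix A1 A2 assume h: "A1 \<in> P" "A2 \<in> P" "strictP r A1 A2"
      thus "xi \<phi> \<pi>0 fG fB A1 < xi \<phi> \<pi>0 fG fB A2" using inc[OF h] xi_less cellE by blast
    next
      fix A1 A2 e1 e2 assume "A1 \<in> P" "A2 \<in> P" "e1 \<in> A1" "e2 \<in> A2" "rel e1 e2"
      thus "(A1, A2) \<in> r" using mon by blast
    next
      fix A L assume "A \<in> P" "lower_contour rel A L"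
      thus "xi \<phi> \<pi>0 fG fB A \<le> xi \<phi> \<pi>0 fG fB L" using lc3 by blast
    qed
  qed
qed

end
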